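(* Let $O$ be the origin of $\mathbb{R}^3$ and $R>0$. Let $x:[0,\tau_1]\to\mathbb{R}^3$ be a twice continuously differentiable trajectory with nowhere-vanishing velocity $\dot x(\tau)\neq 0$, satisfying the central-attraction equation $\ddot x(\tau) = -\kappa(\tau)\,x(\tau)$ with $\kappa(\tau)>0$ for all $\tau$. Let $A=x(0)$ with $|A|<R$, and suppose the trajectory reaches the sphere $\{|p|=R\}$, with $B = x(\tau_B)$ the first point where $|x(\tau)|=R$. Let $d=\dot x(0)/|\dot x(0)|$ be the initial direction, and let $P = A + t^\ast d$, where $t^\ast>0$ is the unique positive number with $|A+t^\ast d| = R$. Let $L_{AB}=\int_0^{\tau_B}|\dot x(\tau)|\,d\tau$ be the arclength of the trajectory from $A$ to $B$. Then $$L_{AB}\ \geq\ |AP|.$$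
   Context: This models a light ray in the near-field ball of radius $R$ around a black hole centered at $O$, with gravity approximated by Newtonian attraction toward the center, so that the acceleration is always directed toward $O$ and bends the path toward the center. $|AP|$ denotes the Euclidean distance between $A$ and $P$. *)

theory Defs
  imports "HOL-Analysis.Analysis"
begin

end

theory Submission
  imports Defs "HOL-Analysis.Analysis"
begin

lemma vd_inner:
  fixes f g :: "real \<Rightarrow> 'a::real_inner"
  assumes "(f has_vector_derivative f') (at t within S)" "(g has_vector_derivative g') (at t within S)"
  shows "((\<lambda>s. f s \<bullet> g s) has_real_derivative (f t \<bullet> g' + f' \<bullet> g t)) (at t within S)"
  using has_derivative_inner[OF assms[unfolded has_vector_derivative_def]]
  unfolding has_field_derivative_def
  by (rule has_derivative_eq_rhs) (auto simp: algebra_simps inner_scaleR_left inner_scaleR_right)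

lemma aux_inv2: "inverse (s::real) / 2 * y = y / (2 * s)"
  by (simp add: field_simps)
lemma aux_pow2: "of_nat 2 * ((D::real) * P ^ (2 - Suc 0)) = 2 * P * D"
  by simp
lemma aux_div: "((a::real) * n - b * (inverse n / 2 * e)) / (n * n) = (a * n - b * (e / (2 * n))) / n\<^sup>2"
  by (simp only: aux_inv2 power2_eq_square)

lemma T_deriv:
  fixes q nn rr :: "real \<Rightarrow> real"
  assumes "(q has_real_derivative q') (at t)" "(nn has_real_derivative nn') (at t)"
    "(rr has_real_derivative rr') (at t)" "nn t > 0" "(q t / sqrt (nn t))\<^sup>2 + c - rr t > 0"
  shows "((\<lambda>s. - (q s / sqrt (nn s)) + sqrt ((q s / sqrt (nn s))\<^sup>2 + c - rr s)) has_real_derivative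
     (let n = sqrt (nn t); p = q t / n; S = sqrt (p\<^sup>2 + c - rr t);
          p' = (q' * n - q t * (nn' / (2 * n))) / n\<^sup>2 in - p' + (2 * p * p' - rr') / (2 * S))) (at t)"
proof -
  have sq: "((\<lambda>s. sqrt (nn s)) has_real_derivative inverse (sqrt (nn t)) / 2 * nn') (at t)"
    by (rule DERIV_chain2[OF DERIV_real_sqrt[OF assms(4)] assms(2)])
  have nz: "sqrt (nn t) \<noteq> 0" using assms(4) by simp
  define p' where "p' = (q' * sqrt (nn t) - q t * (nn' / (2 * sqrt (nn t)))) / (sqrt (nn t))\<^sup>2"
  have hp: "((\<lambda>s. q s / sqrt (nn s)) has_real_derivative p') (at t)"
    unfolding p'_def aux_div[symmetric] by (rule DERIV_divide[OF assms(1) sq nz])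
  have h2: "((\<lambda>s. (q s / sqrt (nn s))\<^sup>2 + c - rr s) has_real_derivative 2 * (q t / sqrt (nn t)) * p' - rr') (at t)"
  proof -
    have "((\<lambda>s. (q s / sqrt (nn s))\<^sup>2 + c - rr s) has_real_derivative
       of_nat 2 * (p' * (q t / sqrt (nn t)) ^ (2 - Suc 0)) + 0 - rr') (at t)"
      by (rule DERIV_diff[OF DERIV_add[OF DERIV_power[OF hp] DERIV_const] assms(3)])
    then show ?thesis by (simp only: aux_pow2 add_0_right)
  qed
  have h3: "((\<lambda>s. sqrt ((q s / sqrt (nn s))\<^sup>2 + c - rr s)) has_real_derivative
      (2 * (q t / sqrt (nn t)) * p' - rr') / (2 * sqrt ((q t / sqrt (nn t))\<^sup>2 + c - rr t))) (at t)"
    using DERIV_chain2[OF DERIV_real_sqrt[OF assms(5)] h2] by (simp only: aux_inv2)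
  show ?thesis unfolding Let_def p'_def[symmetric]
    by (rule DERIV_add[OF DERIV_minus[OF hp] h3])
qed
lemma T_ineq:
  fixes q n rr \<kappa> R S :: real
  assumes n: "n > 0" and k: "\<kappa> \<ge> 0" and cs: "q\<^sup>2 \<le> rr * n\<^sup>2"
    and S: "S = sqrt ((q / n)\<^sup>2 + R\<^sup>2 - rr)" and Spos: "(q / n)\<^sup>2 + R\<^sup>2 - rr > 0" and rR: "rr \<le> R\<^sup>2"
  shows "- ((( n\<^sup>2 - \<kappa> * rr) * n - q * ((- 2 * \<kappa> * q) / (2 * n))) / n\<^sup>2)
     + (2 * (q/n) * ((( n\<^sup>2 - \<kappa> * rr) * n - q * ((- 2 * \<kappa> * q) / (2 * n))) / n\<^sup>2) - 2 * q) / (2 * S) \<ge> - n"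
proof -
  define p where "p = q / n"
  have q: "q = p * n" using n by (simp add: p_def)
  have pp: "p\<^sup>2 \<le> rr" using cs n by (simp add: q power_mult_distrib)
  have p': "(( n\<^sup>2 - \<kappa> * rr) * n - q * ((- 2 * \<kappa> * q) / (2 * n))) / n\<^sup>2 = n - \<kappa> * (rr - p\<^sup>2) / n"
    using n by (simp add: q field_simps power2_eq_square)
  have Sp: "S > 0" "S \<ge> p" using S Spos pp rR
    by (auto simp: p_def intro!: real_le_rsqrt)
  define c where "c = \<kappa> * (rr - p\<^sup>2) / n"
  have c: "c \<ge> 0" using k pp n by (simp add: c_def)
  have "- (n - c) + (2 * p * (n - c) - 2 * (p * n)) / (2 * S) = - n + c * (1 - p / S)"
    using Sp by (simp add: field_simps)
  also have "\<dots> \<ge> - n"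
  proof -
    have "p / S \<le> 1" using Sp by simp
    then show ?thesis using c by simp
  qed
  finally have "- (n - c) + (2 * p * (n - c) - 2 * (p * n)) / (2 * S) \<ge> - n" .
  moreover have "- 2 * \<kappa> * q / (2 * n) = - \<kappa> * q / n" by simp
  ultimately show ?thesis unfolding p' c_def[symmetric] using n by (simp add: q)
qed

lemma aux_exp: "((a::'a::real_inner) + t *\<^sub>R d) \<bullet> (a + t *\<^sub>R d) = a \<bullet> a + 2 * t * (a \<bullet> d) + t\<^sup>2 * (d \<bullet> d)"
  by (simp add: inner_add_left inner_add_right inner_commute[of d a] power2_eq_square algebra_simps)
lemma aux_sq: "\<not> (t::real) + p \<ge> 0 \<Longrightarrow> t > 0 \<Longrightarrow> (t + p)\<^sup>2 < p\<^sup>2"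
proof -
  assume h: "\<not> t + p \<ge> 0" "t > 0"
  have "(- (t + p))\<^sup>2 < (- p)\<^sup>2" by (rule power_strict_mono) (use h in auto)
  then show ?thesis by (simp only: power2_minus)
qed
lemma aux_pq: "(x::'a::real_inner) \<bullet> v / norm v = x \<bullet> (v /\<^sub>R norm v)"
  by (simp only: inner_scaleR_right divide_inverse_commute)

theorem proposition1:
  fixes x v a :: "real \<Rightarrow> real ^ 3"
    and \<kappa> :: "real \<Rightarrow> real"
    and R \<tau>1 \<tau>B tstar :: real
  assumes R_pos: "R > 0"
    and x_deriv: "\<And>t. t \<in> {0..\<tau>1} \<Longrightarrow> (x has_vector_derivative v t) (at t within {0..\<tau>1})"
    and v_deriv: "\<And>t. t \<in> {0..\<tau>1} \<Longrightarrow> (v has_vector_derivative a t) (at t within {0..\<tau>1})"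
    and a_cont: "continuous_on {0..\<tau>1} a"
    and v_nonzero: "\<And>t. t \<in> {0..\<tau>1} \<Longrightarrow> v t \<noteq> 0"
    and central: "\<And>t. t \<in> {0..\<tau>1} \<Longrightarrow> a t = - (\<kappa> t) *\<^sub>R x t"
    and kappa_pos: "\<And>t. t \<in> {0..\<tau>1} \<Longrightarrow> \<kappa> t > 0"
    and A_inside: "norm (x 0) < R"
    and tauB_range: "\<tau>B \<in> {0..\<tau>1}"
    and B_on_sphere: "norm (x \<tau>B) = R"
    and B_first: "\<And>t. t \<in> {0..<\<tau>B} \<Longrightarrow> norm (x t) \<noteq> R"
    and tstar_pos: "tstar > 0"
    and P_on_sphere: "norm (x 0 + tstar *\<^sub>R (v 0 /\<^sub>R norm (v 0))) = R"
  shows "integral {0..\<tau>B} (\<lambda>t. norm (v t))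
           \<ge> dist (x 0) (x 0 + tstar *\<^sub>R (v 0 /\<^sub>R norm (v 0)))"
proof -
  let ?S = "{0..\<tau>1}"
  have cx: "continuous_on ?S x" by (rule continuous_on_vector_derivative[OF x_deriv])
  have cv: "continuous_on ?S v" by (rule continuous_on_vector_derivative[OF v_deriv])
  have tB0: "\<tau>B > 0"
  proof (rule ccontr)
    assume "\<not> \<tau>B > 0" then have "\<tau>B = 0" using tauB_range by auto
    then show False using A_inside B_on_sphere by simp
  qed
  have sub: "{0..\<tau>B} \<subseteq> ?S" using tauB_range by auto
  have inside: "norm (x t) < R" if t: "t \<in> {0..<\<tau>B}" for t
  proof (rule ccontr)
    assume "\<not> norm (x t) < R"
    then have "norm (x 0) \<le> R" "R \<le> norm (x t)" using A_inside by auto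
    moreover have "continuous_on {0..t} (\<lambda>s. norm (x s))"
    proof -
      have "{0..t} \<subseteq> ?S" using t tauB_range by auto
      then show ?thesis by (intro continuous_on_norm continuous_on_subset[OF cx])
    qed
    ultimately obtain s where "0 \<le> s" "s \<le> t" "norm (x s) = R"
      using IVT'[of "\<lambda>s. norm (x s)" 0 R t] t by auto
    then show False using B_first[of s] t by auto
  qed
  define q where "q t = x t \<bullet> v t" for t
  define nn where "nn t = v t \<bullet> v t" for t
  define rr where "rr t = x t \<bullet> x t" for t
  define T where "T t = - (q t / sqrt (nn t)) + sqrt ((q t / sqrt (nn t))\<^sup>2 + R\<^sup>2 - rr t)" for t
  define F where "F t = T t + integral {0..t} (\<lambda>s. norm (v s))" for t
  have nnv: "sqrt (nn t) = norm (v t)" for t by (simp add: nn_def norm_eq_sqrt_inner)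
  have rrx: "rr t = (norm (x t))\<^sup>2" for t by (simp add: rr_def power2_norm_eq_inner)
  have cnv: "continuous_on ?S (\<lambda>s. norm (v s))" using cv by (intro continuous_intros)
  have mono: "F 0 \<le> F \<tau>B"
  proof (rule DERIV_nonneg_imp_increasing_open[of 0 "\<tau>B" F])
    show "0 \<le> \<tau>B" using tB0 by simp
  next
    fix t assume t0: "0 < t" and t1: "t < \<tau>B"
    have tS: "t \<in> ?S" using t0 t1 tauB_range by auto
    have "t \<in> interior ?S" using t0 t1 tauB_range by auto
    then have atw: "at t within ?S = at t" by (rule at_within_interior)
    have xd: "(x has_vector_derivative v t) (at t)" using x_deriv[OF tS] atw by simp
    have vd: "(v has_vector_derivative a t) (at t)" using v_deriv[OF tS] atw by simp
    have at: "a t = - (\<kappa> t) *\<^sub>R x t" using central[OF tS] .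
    have hq: "(q has_real_derivative (sqrt (nn t))\<^sup>2 - \<kappa> t * rr t) (at t)"
    proof -
      have "(q has_real_derivative (x t \<bullet> a t + v t \<bullet> v t)) (at t)"
        using vd_inner[OF xd vd] unfolding q_def[abs_def] .
      moreover have "x t \<bullet> a t + v t \<bullet> v t = (sqrt (nn t))\<^sup>2 - \<kappa> t * rr t"
        by (simp add: at nn_def rr_def)
      ultimately show ?thesis by simp
    qed
    have hnn: "(nn has_real_derivative - 2 * \<kappa> t * q t) (at t)"
    proof -
      have "(nn has_real_derivative (v t \<bullet> a t + a t \<bullet> v t)) (at t)"
        using vd_inner[OF vd vd] unfolding nn_def[abs_def] .
      moreover have "v t \<bullet> a t + a t \<bullet> v t = - 2 * \<kappa> t * q t"
        by (simp add: at q_def inner_commute)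
      ultimately show ?thesis by simp
    qed
    have hrr: "(rr has_real_derivative 2 * q t) (at t)"
    proof -
      have "(rr has_real_derivative (x t \<bullet> v t + v t \<bullet> x t)) (at t)"
        using vd_inner[OF xd xd] unfolding rr_def[abs_def] .
      moreover have "x t \<bullet> v t + v t \<bullet> x t = 2 * q t"
        by (simp add: q_def inner_commute)
      ultimately show ?thesis by simp
    qed
    have nnpos: "nn t > 0" using v_nonzero[OF tS] by (simp add: nn_def)
    have rrlt: "rr t < R\<^sup>2" unfolding rrx
      by (rule power_strict_mono) (use inside[of t] t0 t1 in auto)
    have pos: "(q t / sqrt (nn t))\<^sup>2 + R\<^sup>2 - rr t > 0"
    proof -
      have "0 \<le> (q t / sqrt (nn t))\<^sup>2" by simp
      then show ?thesis using rrlt by linarith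
    qed
    have dT: "(T has_real_derivative
      (let n = sqrt (nn t); p = q t / n; S = sqrt (p\<^sup>2 + R\<^sup>2 - rr t);
          p' = (((sqrt (nn t))\<^sup>2 - \<kappa> t * rr t) * n - q t * ((- 2 * \<kappa> t * q t) / (2 * n))) / n\<^sup>2
       in - p' + (2 * p * p' - 2 * q t) / (2 * S))) (at t)"
      unfolding T_def[abs_def] by (rule T_deriv[OF hq hnn hrr nnpos pos])
    have dI: "((\<lambda>u. integral {0..u} (\<lambda>s. norm (v s))) has_real_derivative norm (v t)) (at t)"
      using integral_has_vector_derivative[OF cnv tS] atw
      by (simp add: has_real_derivative_iff_has_vector_derivative)
    have cs: "(q t)\<^sup>2 \<le> rr t * (sqrt (nn t))\<^sup>2"
    proof -
      have "\<bar>q t\<bar> \<le> norm (x t) * norm (v t)" unfolding q_def by (rule Cauchy_Schwarz_ineq2)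
      then have "(q t)\<^sup>2 \<le> (norm (x t) * norm (v t))\<^sup>2"
        by (metis abs_ge_zero power2_abs power_mono)
      then show ?thesis by (simp only: rrx nnv power_mult_distrib)
    qed
    have ineq: "- sqrt (nn t) \<le> (let n = sqrt (nn t); p = q t / n; S = sqrt (p\<^sup>2 + R\<^sup>2 - rr t);
          p' = (((sqrt (nn t))\<^sup>2 - \<kappa> t * rr t) * n - q t * ((- 2 * \<kappa> t * q t) / (2 * n))) / n\<^sup>2
       in - p' + (2 * p * p' - 2 * q t) / (2 * S))"
      unfolding Let_def
      by (rule T_ineq[OF _ _ cs refl pos]) (use nnpos kappa_pos[OF tS] rrlt in auto)
    have "((\<lambda>t. T t + integral {0..t} (\<lambda>s. norm (v s))) has_real_derivative
      (let n = sqrt (nn t); p = q t / n; S = sqrt (p\<^sup>2 + R\<^sup>2 - rr t);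
          p' = (((sqrt (nn t))\<^sup>2 - \<kappa> t * rr t) * n - q t * ((- 2 * \<kappa> t * q t) / (2 * n))) / n\<^sup>2
       in - p' + (2 * p * p' - 2 * q t) / (2 * S)) + norm (v t)) (at t)"
      by (rule DERIV_add[OF dT dI])
    then show "\<exists>y. DERIV F t :> y \<and> y \<ge> 0"
      unfolding F_def[abs_def] using ineq nnv[of t] by (intro exI conjI) (assumption, linarith)
  next
    have cT: "continuous_on {0..\<tau>B} T"
    proof -
      have cx': "continuous_on {0..\<tau>B} x" using continuous_on_subset[OF cx sub] .
      have cv': "continuous_on {0..\<tau>B} v" using continuous_on_subset[OF cv sub] .
      have nz: "\<forall>t\<in>{0..\<tau>B}. sqrt (nn t) \<noteq> 0" using v_nonzero sub by (auto simp: nn_def)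
      have cq: "continuous_on {0..\<tau>B} q" unfolding q_def[abs_def]
        by (intro continuous_on_inner cx' cv')
      have cnn: "continuous_on {0..\<tau>B} nn" unfolding nn_def[abs_def]
        by (intro continuous_on_inner cv')
      have crr: "continuous_on {0..\<tau>B} rr" unfolding rr_def[abs_def]
        by (intro continuous_on_inner cx')
      have cp: "continuous_on {0..\<tau>B} (\<lambda>t. q t / sqrt (nn t))"
        by (rule continuous_on_divide[OF cq continuous_on_real_sqrt[OF cnn]]) (use nz in auto)
      show ?thesis unfolding T_def[abs_def]
        by (intro continuous_on_add continuous_on_minus continuous_on_real_sqrt continuous_on_diff
             continuous_on_power cp crr continuous_on_const)
    qed
    have cI: "continuous_on {0..\<tau>B} (\<lambda>t. integral {0..t} (\<lambda>s. norm (v s)))"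
      by (rule indefinite_integral_continuous_1, rule integrable_continuous_real,
          rule continuous_on_subset[OF cnv sub])
    show "continuous_on {0..\<tau>B} F" unfolding F_def[abs_def]
      by (intro continuous_intros cT cI)
  qed
  have tBS: "\<tau>B \<in> ?S" using tauB_range .
  have rrB: "rr \<tau>B = R\<^sup>2" using B_on_sphere by (simp add: rrx)
  have qB: "q \<tau>B \<ge> 0"
  proof -
    have "(rr has_real_derivative (x \<tau>B \<bullet> v \<tau>B + v \<tau>B \<bullet> x \<tau>B)) (at \<tau>B within ?S)"
      using vd_inner[OF x_deriv[OF tBS] x_deriv[OF tBS]] unfolding rr_def[abs_def] .
    then have "(rr has_real_derivative (x \<tau>B \<bullet> v \<tau>B + v \<tau>B \<bullet> x \<tau>B)) (at \<tau>B within {0..<\<tau>B})"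
      by (rule DERIV_subset) (use tauB_range in auto)
    then have lim: "((\<lambda>y. (rr y - rr \<tau>B) / (y - \<tau>B)) \<longlongrightarrow> (x \<tau>B \<bullet> v \<tau>B + v \<tau>B \<bullet> x \<tau>B))
        (at \<tau>B within {0..<\<tau>B})" by (simp add: has_field_derivative_iff)
    have ev: "\<forall>\<^sub>F y in at \<tau>B within {0..<\<tau>B}. 0 \<le> (rr y - rr \<tau>B) / (y - \<tau>B)"
    proof -
      have "0 \<le> (rr y - rr \<tau>B) / (y - \<tau>B)" if y: "y \<in> {0..<\<tau>B}" for y
      proof -
        have "norm (x y) < R" using inside[OF y] .
        then have "rr y < R\<^sup>2" unfolding rrx
          by (intro power_strict_mono) auto
        then show ?thesis using y rrB by (intro divide_nonpos_neg) auto
      qed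
      then show ?thesis by (auto simp: eventually_at_filter)
    qed
    have nb: "at \<tau>B within {0..<\<tau>B} \<noteq> bot"
      using tB0 by (auto simp: trivial_limit_within islimpt_Icc)
    have "0 \<le> x \<tau>B \<bullet> v \<tau>B + v \<tau>B \<bullet> x \<tau>B"
      by (rule tendsto_lowerbound[OF lim ev nb])
    then show ?thesis by (simp add: q_def inner_commute)
  qed
  have TB: "T \<tau>B = 0"
  proof -
    have "sqrt ((q \<tau>B / sqrt (nn \<tau>B))\<^sup>2) = q \<tau>B / sqrt (nn \<tau>B)"
      using qB by (simp add: nn_def)
    then show ?thesis unfolding T_def using rrB by simp
  qed
  have T0: "T 0 = tstar"
  proof -
    define d where "d = v 0 /\<^sub>R norm (v 0)"
    have v0: "v 0 \<noteq> 0" using v_nonzero tauB_range by auto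
    have nd: "norm d = 1" using v0 by (simp add: d_def)
    define p where "p = x 0 \<bullet> d"
    have pq: "q 0 / sqrt (nn 0) = p"
      unfolding p_def d_def q_def nnv by (rule aux_pq)
    have "R\<^sup>2 = (x 0 + tstar *\<^sub>R d) \<bullet> (x 0 + tstar *\<^sub>R d)"
      using P_on_sphere unfolding d_def[symmetric] by (metis power2_norm_eq_inner)
    also have "\<dots> = rr 0 + 2 * tstar * p + tstar\<^sup>2 * (d \<bullet> d)"
      unfolding rr_def p_def by (rule aux_exp)
    also have "d \<bullet> d = 1" using nd by (metis norm_eq_1)
    finally have eq: "(tstar + p)\<^sup>2 = p\<^sup>2 + R\<^sup>2 - rr 0" by (simp add: power2_sum)
    have "tstar + p \<ge> 0"
    proof (rule ccontr)
      assume "\<not> tstar + p \<ge> 0"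
      then have "(tstar + p)\<^sup>2 < p\<^sup>2" using tstar_pos by (rule aux_sq)
      moreover have "rr 0 < R\<^sup>2" unfolding rrx using A_inside by (intro power_strict_mono) auto
      ultimately show False using eq by linarith
    qed
    then have "sqrt (p\<^sup>2 + R\<^sup>2 - rr 0) = tstar + p" using eq by (intro real_sqrt_unique) auto
    then show ?thesis unfolding T_def pq by simp
  qed
  have "F 0 = tstar" unfolding F_def using T0 by simp
  moreover have "F \<tau>B = integral {0..\<tau>B} (\<lambda>t. norm (v t))" unfolding F_def using TB by simp
  moreover have "dist (x 0) (x 0 + tstar *\<^sub>R (v 0 /\<^sub>R norm (v 0))) = tstar"
    using v_nonzero[of 0] tauB_range tstar_pos by (auto simp: dist_norm)
  ultimately show ?thesis using mono by simp
qed

end
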